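(* Let $n\ge1$ and $\mathbf s\in\mathbb C^n$. On the $YQ(1)$-module $V(\mathbf s)$ each $Z_{2i}$ ($i\ge0$) acts by a scalar $\chi_{2i}$, and $\sum_{i\ge0}\chi_{2i}u^{-2i-1}=\dfrac{\sum_{i\ge0}\sigma_{2i+1}(\mathbf s)u^{-2i-1}}{1+\sum_{i\ge1}\sigma_{2i}(\mathbf s)u^{-2i}}$, where $\sigma_p$ is the $p$-th elementary symmetric polynomial ($\sigma_p=0$ for $p>n$).
   Context: $YQ(1)$ is the unital superalgebra generated by $T_{i,j}^{(m)}$, $m\ge1$, $i,j\in\{\pm1\}$, of parity $p(i)+p(j)$ ($p(1)=0,p(-1)=1$), with $T_{i,j}(u)=\delta_{ij}+\sum_m T^{(m)}_{i,j}u^{-m}$ and defining relations $(u^2-v^2)[T_{i,j}(u),T_{k,l}(v)](-1)^{p(i)p(k)+p(i)p(l)+p(k)p(l)}=(u+v)(T_{k,j}(u)T_{i,l}(v)-T_{k,j}(v)T_{i,l}(u))-(u-v)(T_{-k,j}(u)T_{-i,l}(v)-T_{k,-j}(v)T_{i,-l}(u))(-1)^{p(k)+p(l)}$ and $T_{i,j}(-u)=T_{-i,-j}(u)$ (supercommutators). Set $\eta_i=(-\tfrac12)^i(\operatorname{ad}T^{(2)}_{1,1})^i(T^{(1)}_{1,-1})$ and $Z_{2i}=\tfrac12[\eta_0,\eta_{2i}]$ (central elements). Let $U(\mathfrak h_n)$ be the superalgebra generated by odd $\xi_1,\dots,\xi_n$ with $\xi_i\xi_j+\xi_j\xi_i=0$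 ($i\ne j$), $x_i=\xi_i^2$. There is a surjective homomorphism $\varphi_n:YQ(1)\to W^n\subset U(\mathfrak h_n)$ onto the principal finite $W$-algebra of $Q(n)$ with $\varphi_n(T^{(k)}_{1,1})=(-1)^k[\Sigma_k]_{even}$, $\varphi_n(T^{(k)}_{-1,1})=(-1)^k[\Sigma_k]_{odd}$, $\Sigma_k=\sum_{i_1<\dots<i_k}\prod_{j=1}^k(x_{i_j}+(-1)^{k-j}\xi_{i_j})$ ($0$ for $k>n$). $V(\mathbf s)$ is a simple $\mathbb Z_2$-graded $U(\mathfrak h_n)$-module with $x_i$ acting by $s_i$, made into a $YQ(1)$-module via $\varphi_n$. *)

theory Defs
  imports Main "HOL-Computational_Algebra.Formal_Power_Series"
begin

text \<open>A simple Z2-graded module V over U(h_n) on which x_i = xi_i^2 acts by s_i.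
  V is the carrier type 'v, a complex vector space via scale; the odd generators
  xi_i (i = 1..n) act by linear maps; the Z2-grading is encoded by the parity
  involution P (identity on V_0, minus identity on V_1).\<close>
definition simple_graded_module ::
  "(complex \<Rightarrow> 'v::ab_group_add \<Rightarrow> 'v) \<Rightarrow> nat \<Rightarrow> (nat \<Rightarrow> complex)
    \<Rightarrow> (nat \<Rightarrow> 'v \<Rightarrow> 'v) \<Rightarrow> ('v \<Rightarrow> 'v) \<Rightarrow> bool" where
  "simple_graded_module scale n s xi P \<longleftrightarrow>
     Vector_Spaces.vector_space scale
   \<and> (\<forall>i\<in>{1..n}. Vector_Spaces.linear scale scale (xi i))
   \<and> Vector_Spaces.linear scale scale P
   \<and> (\<forall>v. P (P v) = v)
   \<and> (\<forall>i\<in>{1..n}. \<forall>v. P (xi i v) = - xi i (P v))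
   \<and> (\<forall>i\<in>{1..n}. \<forall>j\<in>{1..n}. i \<noteq> j \<longrightarrow> (\<forall>v. xi i (xi j v) + xi j (xi i v) = 0))
   \<and> (\<forall>i\<in>{1..n}. \<forall>v. xi i (xi i v) = scale (s i) v)
   \<and> (\<exists>v::'v. v \<noteq> 0)
   \<and> (\<forall>W. module.subspace scale W \<and> (\<forall>i\<in>{1..n}. xi i ` W \<subseteq> W) \<and> P ` W \<subseteq> W
          \<longrightarrow> W = {0} \<or> W = UNIV)"

text \<open>Action of Sigma_k = sum_{i_1<...<i_k} prod_{j=1}^k (x_{i_j} + (-1)^(k-j) xi_{i_j})
  on V (ordered product = composition, leftmost factor applied last).\<close>
definition Sigma_op ::
  "(complex \<Rightarrow> 'v::ab_group_add \<Rightarrow> 'v) \<Rightarrow> nat \<Rightarrow> (nat \<Rightarrow> 'v \<Rightarrow> 'v) \<Rightarrow> nat \<Rightarrow> 'v \<Rightarrow> 'v" where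
  "Sigma_op scale n xi k = (\<lambda>v. \<Sum>S\<in>{S. S \<subseteq> {1..n} \<and> card S = k}.
      foldr (\<circ>)
        (map (\<lambda>(j, i). (\<lambda>w. xi i (xi i w) + scale ((-1) ^ (k - Suc j)) (xi i w)))
             (zip [0..<k] (sorted_list_of_set S)))
        id v)"

definition even_part :: "(complex \<Rightarrow> 'v::ab_group_add \<Rightarrow> 'v) \<Rightarrow> ('v \<Rightarrow> 'v) \<Rightarrow> ('v \<Rightarrow> 'v) \<Rightarrow> 'v \<Rightarrow> 'v" where
  "even_part scale P A = (\<lambda>v. scale (1/2) (A v + P (A (P v))))"

definition odd_part :: "(complex \<Rightarrow> 'v::ab_group_add \<Rightarrow> 'v) \<Rightarrow> ('v \<Rightarrow> 'v) \<Rightarrow> ('v \<Rightarrow> 'v) \<Rightarrow> 'v \<Rightarrow> 'v" where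
  "odd_part scale P A = (\<lambda>v. scale (1/2) (A v - P (A (P v))))"

definition phiT11 where
  "phiT11 scale n xi P k = (\<lambda>v. scale ((-1) ^ k) (even_part scale P (Sigma_op scale n xi k) v))"

definition phiTm11 where
  "phiTm11 scale n xi P k = (\<lambda>v. scale ((-1) ^ k) (odd_part scale P (Sigma_op scale n xi k) v))"

text \<open>T_{1,-1}(u) = T_{-1,1}(-u), hence T^(m)_{1,-1} = (-1)^m T^(m)_{-1,1}.\<close>
definition phiT1m1 where
  "phiT1m1 scale n xi P m = (\<lambda>v. scale ((-1) ^ m) (phiTm11 scale n xi P m v))"

text \<open>eta_i = (-1/2)^i (ad T^(2)_{1,1})^i (T^(1)_{1,-1}) acting on V
  (T^(2)_{1,1} is even, so ad is the ordinary commutator).\<close>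
definition eta_op where
  "eta_op scale n xi P i = (\<lambda>v. scale ((-1/2) ^ i)
      (((\<lambda>B w. phiT11 scale n xi P 2 (B w) - B (phiT11 scale n xi P 2 w)) ^^ i)
         (phiT1m1 scale n xi P 1) v))"

text \<open>Z_{2i} = 1/2 [eta_0, eta_{2i}]; both are odd, so the supercommutator is the anticommutator.\<close>
definition Z_op where
  "Z_op scale n xi P i = (\<lambda>v. scale (1/2)
      (eta_op scale n xi P 0 (eta_op scale n xi P (2*i) v)
       + eta_op scale n xi P (2*i) (eta_op scale n xi P 0 v)))"

definition elem_sym :: "nat \<Rightarrow> (nat \<Rightarrow> complex) \<Rightarrow> nat \<Rightarrow> complex" where
  "elem_sym n s p = (\<Sum>S\<in>{S. S \<subseteq> {1..n} \<and> card S = p}. \<Prod>i\<in>S. s i)"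

end

theory Submission
  imports Defs
begin
unbundle fps_syntax

lemma fps_const_prod: "(\<Prod>k\<in>X. fps_const (c k)) = fps_const (\<Prod>k\<in>X. c k :: 'a::comm_ring_1)"
  by (induction X rule: infinite_finite_induct) simp_all

lemma prod_expand:
  assumes "finite I"
  shows "(\<Prod>k\<in>I. fps_const (c k) * fps_X + 1) $ p = (\<Sum>X\<in>{X. X \<subseteq> I \<and> card X = p}. \<Prod>k\<in>X. c k :: complex)"
proof -
  have fin: "finite X" if "X \<in> Pow I" for X using that assms finite_subset by auto
  have "(\<Prod>k\<in>I. fps_const (c k) * fps_X + 1) = (\<Sum>X\<in>Pow I. (\<Prod>k\<in>X. fps_const (c k) * fps_X) * (\<Prod>k\<in>I - X. 1))"
    by (rule prod_add[OF assms])
  also have "\<dots> = (\<Sum>X\<in>Pow I. fps_const (\<Prod>k\<in>X. c k) * fps_X ^ card X)"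
    by (intro sum.cong refl) (simp add: prod.distrib fps_const_prod)
  finally have "(\<Prod>k\<in>I. fps_const (c k) * fps_X + 1) $ p = (\<Sum>X\<in>Pow I. if card X = p then (\<Prod>k\<in>X. c k) else 0)"
    by (simp add: fps_sum_nth) (intro sum.cong refl, auto)
  also have "\<dots> = (\<Sum>X\<in>{X\<in>Pow I. card X = p}. \<Prod>k\<in>X. c k)"
    by (rule sum.inter_filter[symmetric]) (simp add: assms)
  finally have "(\<Prod>k\<in>I. fps_const (c k) * fps_X + 1) $ p = (\<Sum>X\<in>{X\<in>Pow I. card X = p}. \<Prod>k\<in>X. c k)" .
  moreover have setEq: "{X\<in>Pow I. card X = p} = {X. X \<subseteq> I \<and> card X = p}" by auto
  ultimately show ?thesis by (simp only: setEq)
qed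

fun cc :: "nat \<Rightarrow> (nat \<Rightarrow> complex) \<Rightarrow> nat \<Rightarrow> nat \<Rightarrow> complex" where
  "cc n s 0 k = 1"
| "cc n s (Suc p) k = (\<Sum>l\<in>{l\<in>{1..n}. k < l}. s l * cc n s p l) - (\<Sum>l\<in>{l\<in>{1..n}. l < k}. s l * cc n s p l)"

definition R :: "complex fps \<Rightarrow> complex fps" where "R f = Abs_fps (\<lambda>m. (-1) ^ m * f $ m)"

lemma R_mult: "R (f * gg) = R f * R gg"
proof (rule fps_ext)
  fix m
  have "R (f * gg) $ m = (\<Sum>i=0..m. (-1) ^ m * (f $ i * gg $ (m - i)))"
    unfolding R_def by (simp add: fps_mult_nth sum_distrib_left)
  also have "\<dots> = (\<Sum>i=0..m. ((-1) ^ i * f $ i) * ((-1) ^ (m - i) * gg $ (m - i)))"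
  proof (rule sum.cong[OF refl])
    fix i assume "i \<in> {0..m}"
    then have "(-1::complex) ^ m = (-1) ^ i * (-1) ^ (m - i)" by (simp add: power_add[symmetric])
    then show "(-1) ^ m * (f $ i * gg $ (m - i)) = ((-1) ^ i * f $ i) * ((-1) ^ (m - i) * gg $ (m - i))"
      by (simp add: algebra_simps)
  qed
  also have "\<dots> = (R f * R gg) $ m" unfolding R_def by (simp add: fps_mult_nth)
  finally show "R (f * gg) $ m = (R f * R gg) $ m" .
qed

context fixes n :: nat and s :: "nat \<Rightarrow> complex"
begin

definition fa :: "nat \<Rightarrow> complex fps" where "fa k = fps_const (s k) * fps_X + 1"
definition fb :: "nat \<Rightarrow> complex fps" where "fb k = fps_const (- s k) * fps_X + 1"
definition FA where "FA = (\<Prod>k\<in>{1..n}. fa k)"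
definition FB where "FB = (\<Prod>k\<in>{1..n}. fb k)"
definition Ev where "Ev = Abs_fps (\<lambda>m. if even m then elem_sym n s m else 0)"
definition Od where "Od = Abs_fps (\<lambda>m. if odd m then elem_sym n s m else 0)"

lemma FA_nth: "FA $ p = elem_sym n s p"
  unfolding FA_def fa_def elem_sym_def by (rule prod_expand) simp

lemma FB_nth: "FB $ p = (-1) ^ p * elem_sym n s p"
proof -
  have "FB $ p = (\<Sum>X\<in>{X. X \<subseteq> {1..n} \<and> card X = p}. \<Prod>k\<in>X. - s k)"
    unfolding FB_def fb_def by (rule prod_expand) simp
  also have "\<dots> = (\<Sum>X\<in>{X. X \<subseteq> {1..n} \<and> card X = p}. (-1) ^ p * (\<Prod>k\<in>X. s k))"
    by (intro sum.cong refl) (auto simp: prod_uminus)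
  finally show ?thesis unfolding elem_sym_def by (simp add: sum_distrib_left)
qed

lemma FA_EO: "FA = Ev + Od"
  by (rule fps_ext) (simp add: FA_nth Ev_def Od_def)

lemma FB_EO: "FB = Ev - Od"
  by (rule fps_ext) (simp add: FB_nth Ev_def Od_def)

definition gg :: "nat \<Rightarrow> complex fps" where "gg l = (\<Prod>j\<in>{1..<l}. fb j) * (\<Prod>j\<in>{l..n}. fa j)"
definition WW :: "nat \<Rightarrow> complex fps" where "WW l = (\<Prod>j\<in>{1..<l}. fb j) * (\<Prod>j\<in>{Suc l..n}. fa j)"

lemma fa_fb: "fa k - fb k = fps_const (2 * s k) * fps_X"
proof -
  have "fa k - fb k = (fps_const (s k) - fps_const (- s k)) * fps_X"
    unfolding fa_def fb_def by (simp only: left_diff_distrib add_diff_add diff_self add_0_right)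
  also have "fps_const (s k) - fps_const (- s k) = fps_const (2 * s k)" by (simp add: fps_eq_iff)
  finally show ?thesis .
qed

lemma fa_fb2: "fa k + fb k = fps_const 2"
proof -
  have "fa k + fb k = (fps_const (s k) + fps_const (- s k)) * fps_X + (1 + 1)"
    unfolding fa_def fb_def by (simp only: distrib_right add_ac)
  also have "fps_const (s k) + fps_const (- s k) = 0" by (simp add: fps_eq_iff)
  finally show ?thesis by (metis fps_const_1_eq_1 fps_const_add mult_zero_left add_0 one_add_one)
qed

lemma g_step: "1 \<le> l \<Longrightarrow> l \<le> n \<Longrightarrow> gg l - gg (Suc l) = fps_X * (fps_const (s l) * (fps_const 2 * WW l))"
proof -
  assume l: "1 \<le> l" "l \<le> n"
  have "gg l = (\<Prod>j\<in>{1..<l}. fb j) * fa l * (\<Prod>j\<in>{Suc l..n}. fa j)"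
    unfolding gg_def using l by (simp add: prod.atLeast_Suc_atMost mult.assoc)
  moreover have "gg (Suc l) = (\<Prod>j\<in>{1..<l}. fb j) * fb l * (\<Prod>j\<in>{Suc l..n}. fa j)"
    unfolding gg_def using l by (simp add: prod.atLeastLessThan_Suc)
  ultimately have "gg l - gg (Suc l) = WW l * (fa l - fb l)"
    unfolding WW_def by (simp add: algebra_simps)
  also have "\<dots> = fps_X * (fps_const (s l) * (fps_const 2 * WW l))"
    unfolding fa_fb by (simp add: fps_const_mult[symmetric] del: fps_const_mult)
  finally show ?thesis .
qed

lemma g_sum_W: "1 \<le> l \<Longrightarrow> l \<le> n \<Longrightarrow> gg l + gg (Suc l) = fps_const 2 * WW l"
proof -
  assume l: "1 \<le> l" "l \<le> n"
  have "gg l = (\<Prod>j\<in>{1..<l}. fb j) * fa l * (\<Prod>j\<in>{Suc l..n}. fa j)"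
    unfolding gg_def using l by (simp add: prod.atLeast_Suc_atMost mult.assoc)
  moreover have "gg (Suc l) = (\<Prod>j\<in>{1..<l}. fb j) * fb l * (\<Prod>j\<in>{Suc l..n}. fa j)"
    unfolding gg_def using l by (simp add: prod.atLeastLessThan_Suc)
  ultimately have "gg l + gg (Suc l) = WW l * (fa l + fb l)"
    unfolding WW_def by (simp add: algebra_simps)
  then show ?thesis unfolding fa_fb2 by (simp add: mult.commute)
qed

lemma g1: "gg 1 = FA" unfolding gg_def FA_def by simp
lemma gSn: "gg (Suc n) = FB" unfolding gg_def FB_def by (simp add: atLeastLessThanSuc_atLeastAtMost)

lemma tele: "m \<le> m' \<Longrightarrow> (\<Sum>l\<in>{m..<m'}. gg l - gg (Suc l)) = gg m - gg m'"
  using sum_Suc_diff'[of m m' gg] by (simp only: sum_subtractf) (metis minus_diff_eq)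

lemma tele_X: "1 \<le> m \<Longrightarrow> m \<le> m' \<Longrightarrow> m' \<le> Suc n \<Longrightarrow>
   (\<Sum>l\<in>{m..<m'}. fps_X * (fps_const (s l) * (fps_const 2 * WW l))) = gg m - gg m'"
proof -
  assume a: "1 \<le> m" "m \<le> m'" "m' \<le> Suc n"
  have "(\<Sum>l\<in>{m..<m'}. fps_X * (fps_const (s l) * (fps_const 2 * WW l))) = (\<Sum>l\<in>{m..<m'}. gg l - gg (Suc l))"
    by (rule sum.cong) (use a in \<open>auto simp: g_step\<close>)
  also have "\<dots> = gg m - gg m'" by (rule tele) (use a in auto)
  finally show ?thesis .
qed

definition NN where "NN = FA + FB"

lemma key: assumes k: "k \<in> {1..n}"
  shows "fps_const 2 * WW k = NN + fps_X * ((\<Sum>l\<in>{l\<in>{1..n}. k < l}. fps_const (s l) * (fps_const 2 * WW l))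
       - (\<Sum>l\<in>{l\<in>{1..n}. l < k}. fps_const (s l) * (fps_const 2 * WW l)))"
proof -
  have s1: "{l\<in>{1..n}. k < l} = {Suc k..<Suc n}" and s2: "{l\<in>{1..n}. l < k} = {1..<k}" using k by auto
  have "fps_X * ((\<Sum>l\<in>{l\<in>{1..n}. k < l}. fps_const (s l) * (fps_const 2 * WW l))
       - (\<Sum>l\<in>{l\<in>{1..n}. l < k}. fps_const (s l) * (fps_const 2 * WW l)))
     = (\<Sum>l\<in>{Suc k..<Suc n}. fps_X * (fps_const (s l) * (fps_const 2 * WW l)))
       - (\<Sum>l\<in>{1..<k}. fps_X * (fps_const (s l) * (fps_const 2 * WW l)))"
    unfolding s1 s2 by (simp only: right_diff_distrib sum_distrib_left)
  also have "\<dots> = (gg (Suc k) - FB) - (FA - gg k)"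
  proof -
    have t1: "(\<Sum>l\<in>{Suc k..<Suc n}. fps_X * (fps_const (s l) * (fps_const 2 * WW l))) = gg (Suc k) - gg (Suc n)"
      by (rule tele_X) (use k in auto)
    have t2: "(\<Sum>l\<in>{1..<k}. fps_X * (fps_const (s l) * (fps_const 2 * WW l))) = gg 1 - gg k"
      by (rule tele_X) (use k in auto)
    show ?thesis unfolding t1 t2 g1 gSn ..
  qed
  finally show ?thesis unfolding NN_def using g_sum_W[of k] k by (simp add: algebra_simps)
qed


lemma FA0: "FA $ 0 = 1" unfolding FA_nth elem_sym_def
proof -
  have "{X. X \<subseteq> {1..n} \<and> card X = 0} = {{}}" by (auto dest: finite_subset)
  then show "(\<Sum>X | X \<subseteq> {1..n} \<and> card X = 0. prod s X) = 1" by simp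
qed

lemma Ev0: "Ev $ 0 = 1" using FA0 unfolding FA_nth Ev_def by simp

lemma NN0: "NN $ 0 = 2" unfolding NN_def using FA0 FA_nth FB_nth by simp

definition yy where "yy k = fps_const 2 * WW k * inverse NN"

lemma y_rec: assumes k: "k \<in> {1..n}"
  shows "yy k = 1 + fps_X * ((\<Sum>l\<in>{l\<in>{1..n}. k < l}. fps_const (s l) * yy l)
       - (\<Sum>l\<in>{l\<in>{1..n}. l < k}. fps_const (s l) * yy l))"
proof -
  have inv: "NN * inverse NN = 1" by (rule inverse_mult_eq_1') (simp add: NN0)
  have "yy k = (NN + fps_X * ((\<Sum>l\<in>{l\<in>{1..n}. k < l}. fps_const (s l) * (fps_const 2 * WW l))
       - (\<Sum>l\<in>{l\<in>{1..n}. l < k}. fps_const (s l) * (fps_const 2 * WW l)))) * inverse NN"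
    unfolding yy_def key[OF k] ..
  also have "\<dots> = NN * inverse NN + fps_X * ((\<Sum>l\<in>{l\<in>{1..n}. k < l}. fps_const (s l) * (fps_const 2 * WW l) * inverse NN)
       - (\<Sum>l\<in>{l\<in>{1..n}. l < k}. fps_const (s l) * (fps_const 2 * WW l) * inverse NN))"
    by (simp only: distrib_right left_diff_distrib sum_distrib_right mult.assoc)
  also have "\<dots> = 1 + fps_X * ((\<Sum>l\<in>{l\<in>{1..n}. k < l}. fps_const (s l) * yy l)
       - (\<Sum>l\<in>{l\<in>{1..n}. l < k}. fps_const (s l) * yy l))"
    unfolding inv yy_def by (simp only: mult.assoc)
  finally show ?thesis .
qed

lemma cc_y: "k \<in> {1..n} \<Longrightarrow> cc n s m k = yy k $ m"
proof (induction m arbitrary: k)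
  case 0
  have "yy k $ 0 = 1" by (subst y_rec[OF 0]) simp
  then show ?case by simp
next
  case (Suc m)
  have "yy k $ Suc m = (\<Sum>l\<in>{l\<in>{1..n}. k < l}. s l * yy l $ m) - (\<Sum>l\<in>{l\<in>{1..n}. l < k}. s l * yy l $ m)"
    by (subst y_rec[OF Suc.prems]) (simp add: fps_sum_nth)
  also have "\<dots> = cc n s (Suc m) k"
    using Suc.IH by simp
  finally show ?case ..
qed

definition F where "F = fps_X * (\<Sum>k\<in>{1..n}. fps_const (s k) * yy k)"

lemma F_Suc: "F $ Suc m = (\<Sum>k\<in>{1..n}. s k * cc n s m k)"
  unfolding F_def by (simp add: fps_sum_nth cc_y)

lemma F_0: "F $ 0 = 0" unfolding F_def by simp

lemma F_N: "F * NN = FA - FB"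
proof -
  have inv: "inverse NN * NN = 1" by (rule inverse_mult_eq_1) (simp add: NN0)
  have "F * NN = (\<Sum>k\<in>{1..<Suc n}. fps_X * (fps_const (s k) * (fps_const 2 * WW k)))"
    unfolding F_def yy_def sum_distrib_right sum_distrib_left atLeastLessThanSuc_atLeastAtMost
    by (intro sum.cong refl) (simp add: inv mult.assoc)
  also have "\<dots> = gg 1 - gg (Suc n)" by (rule tele_X) auto
  finally show ?thesis unfolding g1 gSn .
qed

lemma double_cancel: "(x::complex fps) + x = z + z \<Longrightarrow> x = z"
proof -
  assume h: "x + x = z + z"
  show "x = z"
  proof (rule fps_ext)
    fix m
    have "x $ m + x $ m = z $ m + z $ m" using arg_cong[OF h, of "\<lambda>f. f $ m"] by (simp only: fps_add_nth)
    then show "x $ m = z $ m" by simp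
  qed
qed

lemma F_Ev: "F * Ev = Od"
proof -
  have "NN = Ev + Ev" unfolding NN_def FA_EO FB_EO by (simp add: algebra_simps)
  moreover have "FA - FB = Od + Od" unfolding FA_EO FB_EO by (simp add: algebra_simps)
  ultimately have "F * Ev + F * Ev = Od + Od" using F_N by (simp add: distrib_left)
  then show ?thesis by (rule double_cancel)
qed

lemma F_eq: "F = Od * inverse Ev"
proof -
  have "Ev * inverse Ev = 1" by (rule inverse_mult_eq_1') (simp add: Ev0)
  then show ?thesis unfolding F_Ev[symmetric] by (simp add: mult.assoc)
qed

lemma R_Ev: "R Ev = Ev" unfolding R_def Ev_def by (rule fps_ext) simp
lemma R_Od: "R Od = - Od" unfolding R_def Od_def by (rule fps_ext) simp

lemma R_F: "R F = - F"
proof -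
  have inv: "Ev * inverse Ev = 1" by (rule inverse_mult_eq_1') (simp add: Ev0)
  have "R F * Ev = (- F) * Ev"
    using R_mult[of F Ev] unfolding R_Ev F_Ev R_Od by (simp add: F_Ev)
  then have "R F * Ev * inverse Ev = (- F) * Ev * inverse Ev" by simp
  then show ?thesis unfolding mult.assoc inv by simp
qed

lemma F_even: "even m \<Longrightarrow> F $ m = 0"
proof -
  assume "even m"
  have "R F $ m = (- F) $ m" unfolding R_F ..
  then have "F $ m = - F $ m" unfolding R_def using \<open>even m\<close> by simp
  then show ?thesis by simp
qed

lemma main_fps: "Abs_fps (\<lambda>m. if odd m then (\<Sum>k\<in>{1..n}. s k * cc n s (2 * (m div 2)) k) else 0) = Od * inverse Ev"
proof (rule fps_ext)
  fix m
  show "Abs_fps (\<lambda>m. if odd m then (\<Sum>k\<in>{1..n}. s k * cc n s (2 * (m div 2)) k) else 0) $ m = (Od * inverse Ev) $ m"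
  proof (cases "odd m")
    case True
    then have "m = Suc (2 * (m div 2))" by presburger
    then have "F $ m = (\<Sum>k\<in>{1..n}. s k * cc n s (2 * (m div 2)) k)" using F_Suc by metis
    then show ?thesis using True unfolding F_eq[symmetric] by simp
  next
    case False
    then show ?thesis unfolding F_eq[symmetric] using F_even by simp
  qed
qed

end


locale SGM = vector_space scale for scale :: "complex \<Rightarrow> 'v::ab_group_add \<Rightarrow> 'v" +
  fixes n :: nat and s :: "nat \<Rightarrow> complex" and xi :: "nat \<Rightarrow> 'v \<Rightarrow> 'v" and P :: "'v \<Rightarrow> 'v"
  assumes xi_lin: "i \<in> {1..n} \<Longrightarrow> Vector_Spaces.linear scale scale (xi i)"
  and P_lin: "Vector_Spaces.linear scale scale P"
  and PP: "P (P v) = v"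
  and Pxi: "i \<in> {1..n} \<Longrightarrow> P (xi i v) = - xi i (P v)"
  and anti: "i \<in> {1..n} \<Longrightarrow> j \<in> {1..n} \<Longrightarrow> i \<noteq> j \<Longrightarrow> xi i (xi j v) + xi j (xi i v) = 0"
  and sq: "i \<in> {1..n} \<Longrightarrow> xi i (xi i v) = scale (s i) v"
begin

lemma xi_hom: "i \<in> {1..n} \<Longrightarrow> module_hom scale scale (xi i)"
  using xi_lin module_hom_iff_linear by blast
lemma P_hom: "module_hom scale scale P"
  using P_lin module_hom_iff_linear by blast

lemma xi_add: "i \<in> {1..n} \<Longrightarrow> xi i (a + b) = xi i a + xi i b"
  using module_hom.add[OF xi_hom] by blast
lemma xi_scale: "i \<in> {1..n} \<Longrightarrow> xi i (scale c a) = scale c (xi i a)"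
  using module_hom.scale[OF xi_hom] by blast
lemma xi_neg: "i \<in> {1..n} \<Longrightarrow> xi i (- a) = - xi i a"
  using module_hom.neg[OF xi_hom] by blast
lemma xi_diff: "i \<in> {1..n} \<Longrightarrow> xi i (a - b) = xi i a - xi i b"
  using module_hom.diff[OF xi_hom] by blast
lemma xi_sum: "i \<in> {1..n} \<Longrightarrow> xi i (sum g A) = (\<Sum>x\<in>A. xi i (g x))"
  using module_hom.sum[OF xi_hom] by blast
lemma P_add: "P (a + b) = P a + P b"
  using module_hom.add[OF P_hom] by blast
lemma P_scale: "P (scale c a) = scale c (P a)"
  using module_hom.scale[OF P_hom] by blast
lemma P_diff: "P (a - b) = P a - P b"
  using module_hom.diff[OF P_hom] by blast
lemma P_sum: "P (sum g A) = (\<Sum>x\<in>A. P (g x))"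
  using module_hom.sum[OF P_hom] by blast

abbreviation "I \<equiv> {1..n}"

definition Qa :: "(nat \<Rightarrow> complex) \<Rightarrow> 'v \<Rightarrow> 'v" where
  "Qa a v = (\<Sum>k\<in>I. scale (a k) (xi k v))"

definition Aop :: "'v \<Rightarrow> 'v" where
  "Aop v = (\<Sum>i\<in>I. \<Sum>j\<in>{j\<in>I. i < j}. xi i (xi j v))"

definition sig2 :: complex where
  "sig2 = (\<Sum>i\<in>I. \<Sum>j\<in>{j\<in>I. i < j}. s i * s j)"

lemma Qa_add: "Qa a (x + y) = Qa a x + Qa a y"
  unfolding Qa_def by (simp add: xi_add scale_right_distrib sum.distrib)
lemma Qa_scale: "Qa a (scale c x) = scale c (Qa a x)"
  unfolding Qa_def by (simp add: xi_scale scale_sum_right mult.commute)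
lemma Qa_diff: "Qa a (x - y) = Qa a x - Qa a y"
  unfolding Qa_def by (simp add: xi_diff scale_right_diff_distrib sum_subtractf)

lemma scale2: "scale 2 x = x + x"
  by (metis one_add_one scale_left_distrib scale_one)

lemma card1_sets: "{S. S \<subseteq> I \<and> card S = 1} = (\<lambda>i. {i}) ` I"
  by (auto simp: card_1_singleton_iff)

lemma Sigma1: "Sigma_op scale n xi 1 v = (\<Sum>i\<in>I. scale (s i) v + xi i v)"
proof -
  have "Sigma_op scale n xi 1 v = (\<Sum>S\<in>(\<lambda>i. {i}) ` I. foldr (\<circ>)
        (map (\<lambda>(j, i). (\<lambda>w. xi i (xi i w) + scale ((-1) ^ (1 - Suc j)) (xi i w)))
             (zip [0..<1] (sorted_list_of_set S))) id v)"
    unfolding Sigma_op_def card1_sets ..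
  also have "\<dots> = (\<Sum>i\<in>I. xi i (xi i v) + xi i v)"
    by (subst sum.reindex) (auto simp: inj_on_def)
  also have "\<dots> = (\<Sum>i\<in>I. scale (s i) v + xi i v)"
    by (rule sum.cong) (auto simp: sq)
  finally show ?thesis .
qed

lemma T1m1: "phiT1m1 scale n xi P 1 v = Qa (\<lambda>_. 1) v"
proof -
  have "P (Sigma_op scale n xi 1 (P v)) = (\<Sum>i\<in>I. scale (s i) v - xi i v)"
    unfolding Sigma1 P_sum by (rule sum.cong) (auto simp: P_add P_scale PP Pxi)
  then have "odd_part scale P (Sigma_op scale n xi 1) v = scale (1/2) (\<Sum>i\<in>I. scale 2 (xi i v))"
    unfolding odd_part_def Sigma1 by (simp add: sum_subtractf[symmetric] scale2)
  also have "\<dots> = (\<Sum>i\<in>I. xi i v)" by (simp add: scale_sum_right)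
  finally show ?thesis unfolding phiT1m1_def phiTm11_def Qa_def by simp
qed

definition PS where "PS = Sigma I (\<lambda>i. {j\<in>I. i < j})"

lemma card2_sets: "{S. S \<subseteq> I \<and> card S = 2} = (\<lambda>(i,j). {i,j}) ` PS"
proof
  show "{S. S \<subseteq> I \<and> card S = 2} \<subseteq> (\<lambda>(i,j). {i,j}) ` PS"
  proof
    fix S assume "S \<in> {S. S \<subseteq> I \<and> card S = 2}"
    then have S: "S \<subseteq> I" "card S = 2" by auto
    then obtain a b where ab: "S = {a,b}" "a \<noteq> b" by (meson card_2_iff)
    show "S \<in> (\<lambda>(i,j). {i,j}) ` PS"
    proof (cases "a < b")
      case True then show ?thesis using S ab unfolding PS_def
        by (auto intro!: image_eqI[where x="(a,b)"])
    next
      case False then have "b < a" using ab by auto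
      then show ?thesis using S ab unfolding PS_def
        by (auto intro!: image_eqI[where x="(b,a)"])
    qed
  qed
  show "(\<lambda>(i,j). {i,j}) ` PS \<subseteq> {S. S \<subseteq> I \<and> card S = 2}"
    unfolding PS_def by auto
qed

lemma inj_PS: "inj_on (\<lambda>(i,j). {i,j}) PS"
  unfolding PS_def inj_on_def by (auto simp: doubleton_eq_iff)

lemma sorted2: "i < j \<Longrightarrow> sorted_list_of_set {i,j} = [i,j]"
  by (auto simp: sorted_list_of_set_unique[symmetric])

lemma Sigma2: "Sigma_op scale n xi 2 v = (\<Sum>i\<in>I. \<Sum>j\<in>{j\<in>I. i < j}.
    scale (s i * s j) v + scale (s i) (xi j v) - scale (s j) (xi i v) - xi i (xi j v))"
proof -
  have "Sigma_op scale n xi 2 v = (\<Sum>S\<in>(\<lambda>(i,j). {i,j}) ` PS. foldr (\<circ>)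
        (map (\<lambda>(j, i). (\<lambda>w. xi i (xi i w) + scale ((-1) ^ (2 - Suc j)) (xi i w)))
             (zip [0..<2] (sorted_list_of_set S))) id v)"
    unfolding Sigma_op_def card2_sets ..
  also have "\<dots> = (\<Sum>(i,j)\<in>PS. xi i (xi i (xi j (xi j v) + xi j v)) - xi i (xi j (xi j v) + xi j v))"
    apply (subst sum.reindex[OF inj_PS])
    apply (rule sum.cong[OF refl])
    apply (auto simp: PS_def sorted2 upt_rec)
    done
  also have "\<dots> = (\<Sum>(i,j)\<in>PS. scale (s i * s j) v + scale (s i) (xi j v) - scale (s j) (xi i v) - xi i (xi j v))"
    apply (rule sum.cong[OF refl])
    apply (auto simp: PS_def sq xi_add scale_right_distrib xi_scale)
    done
  finally show ?thesis unfolding PS_def by (simp add: sum.Sigma[symmetric])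
qed

lemma T2: "phiT11 scale n xi P 2 v = scale sig2 v - Aop v"
proof -
  have "P (Sigma_op scale n xi 2 (P v)) = (\<Sum>i\<in>I. \<Sum>j\<in>{j\<in>I. i < j}.
    scale (s i * s j) v - scale (s i) (xi j v) + scale (s j) (xi i v) - xi i (xi j v))"
    unfolding Sigma2 P_sum
    by (intro sum.cong refl) (auto simp: P_add P_diff P_scale PP Pxi xi_neg)
  then have "even_part scale P (Sigma_op scale n xi 2) v = scale (1/2) (\<Sum>i\<in>I. \<Sum>j\<in>{j\<in>I. i < j}.
      (scale (s i * s j) v - xi i (xi j v)) + (scale (s i * s j) v - xi i (xi j v)))"
    unfolding even_part_def Sigma2
    by (simp add: sum.distrib[symmetric] algebra_simps)
  also have "\<dots> = scale (1/2) (\<Sum>i\<in>I. \<Sum>j\<in>{j\<in>I. i < j}.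
      scale 2 (scale (s i * s j) v - xi i (xi j v)))"
    by (simp only: scale2)
  also have "\<dots> = (\<Sum>i\<in>I. \<Sum>j\<in>{j\<in>I. i < j}. scale (s i * s j) v - xi i (xi j v))"
    by (simp only: scale_sum_right scale_scale) simp
  also have "\<dots> = scale sig2 v - Aop v"
    unfolding sig2_def Aop_def by (simp add: sum_subtractf scale_sum_left)
  finally show ?thesis unfolding phiT11_def by simp
qed

lemma anti': "i \<in> I \<Longrightarrow> j \<in> I \<Longrightarrow> i \<noteq> j \<Longrightarrow> xi i (xi j v) = - xi j (xi i v)"
  using anti[of i j v] by (simp add: eq_neg_iff_add_eq_0)

lemma scale_m2: "scale (-2 * c) x = - scale c x - scale c x"
  by (metis mult_minus_left scale2 scale_minus_left scale_scale diff_conv_add_uminus minus_add_distrib)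

lemma scale_2: "scale (2 * c) x = scale c x + scale c x"
  by (metis scale2 scale_scale)

lemma triple:
  assumes "i \<in> I" "j \<in> I" "k \<in> I" "i < j"
  shows "xi i (xi j (xi k v)) - xi k (xi i (xi j v)) =
    (if k = i then scale (-2 * s i) (xi j v) else 0) + (if k = j then scale (2 * s j) (xi i v) else 0)"
proof (cases "k = i")
  case True
  then have "xi i (xi j (xi k v)) = - scale (s i) (xi j v)"
    using assms by (simp add: anti'[of j i] xi_neg sq)
  moreover have "xi k (xi i (xi j v)) = scale (s i) (xi j v)" using assms True by (simp add: sq)
  ultimately show ?thesis using True assms by (simp add: scale_2)
next
  case False
  show ?thesis
  proof (cases "k = j")
    case True
    then have "xi i (xi j (xi k v)) = scale (s j) (xi i v)"
      using assms by (simp add: sq xi_scale)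
    moreover have "xi k (xi i (xi j v)) = - scale (s j) (xi i v)"
      using assms True by (simp add: anti'[of i j] xi_neg sq)
    ultimately show ?thesis using True False assms by (simp add: scale_2)
  next
    case False2: False
    have "xi i (xi j (xi k v)) = xi k (xi i (xi j v))"
      using assms False False2 by (simp add: anti'[of j k] anti'[of i k] xi_neg)
    then show ?thesis using False False2 by simp
  qed
qed

definition step :: "(nat \<Rightarrow> complex) \<Rightarrow> nat \<Rightarrow> complex" where
  "step a m = (\<Sum>l\<in>{l\<in>I. m < l}. s l * a l) - (\<Sum>l\<in>{l\<in>I. l < m}. s l * a l)"

lemma comm: "Aop (Qa a v) - Qa a (Aop v) = Qa (\<lambda>m. 2 * step a m) v"
proof -
  have fin: "finite {j\<in>I. i < j}" for i by simp
  have 1: "Aop (Qa a v) = (\<Sum>i\<in>I. \<Sum>j\<in>{j\<in>I. i < j}. \<Sum>k\<in>I. scale (a k) (xi i (xi j (xi k v))))"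
    unfolding Aop_def Qa_def by (intro sum.cong refl) (auto simp: xi_sum xi_scale)
  have "Qa a (Aop v) = (\<Sum>k\<in>I. \<Sum>i\<in>I. \<Sum>j\<in>{j\<in>I. i < j}. scale (a k) (xi k (xi i (xi j v))))"
    unfolding Aop_def Qa_def by (intro sum.cong refl) (auto simp: xi_sum scale_sum_right)
  also have "\<dots> = (\<Sum>i\<in>I. \<Sum>k\<in>I. \<Sum>j\<in>{j\<in>I. i < j}. scale (a k) (xi k (xi i (xi j v))))"
    by (rule sum.swap)
  also have "\<dots> = (\<Sum>i\<in>I. \<Sum>j\<in>{j\<in>I. i < j}. \<Sum>k\<in>I. scale (a k) (xi k (xi i (xi j v))))"
    by (intro sum.cong refl sum.swap)
  finally have 2: "Qa a (Aop v) = \<dots>" .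
  have "Aop (Qa a v) - Qa a (Aop v) = (\<Sum>i\<in>I. \<Sum>j\<in>{j\<in>I. i < j}. \<Sum>k\<in>I.
      scale (a k) (xi i (xi j (xi k v)) - xi k (xi i (xi j v))))"
    unfolding 1 2 by (simp add: sum_subtractf[symmetric] scale_right_diff_distrib)
  also have "\<dots> = (\<Sum>i\<in>I. \<Sum>j\<in>{j\<in>I. i < j}. \<Sum>k\<in>I.
      (if k = i then scale (a i) (scale (-2 * s i) (xi j v)) else 0) +
      (if k = j then scale (a j) (scale (2 * s j) (xi i v)) else 0))"
    by (intro sum.cong refl) (auto simp: triple scale_right_distrib)
  also have "\<dots> = (\<Sum>i\<in>I. \<Sum>j\<in>{j\<in>I. i < j}.
      scale (-2 * s i * a i) (xi j v) + scale (2 * s j * a j) (xi i v))"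
    by (intro sum.cong refl) (auto simp: sum.distrib mult.commute mult.left_commute)
  also have "\<dots> = (\<Sum>i\<in>I. \<Sum>j\<in>{j\<in>I. i < j}. scale (-2 * s i * a i) (xi j v)) +
      (\<Sum>i\<in>I. \<Sum>j\<in>{j\<in>I. i < j}. scale (2 * s j * a j) (xi i v))"
    by (simp only: sum.distrib)
  also have "(\<Sum>i\<in>I. \<Sum>j\<in>{j\<in>I. i < j}. scale (-2 * s i * a i) (xi j v)) =
      (\<Sum>j\<in>I. \<Sum>i\<in>{i\<in>I. i < j}. scale (-2 * s i * a i) (xi j v))"
    by (rule sum.swap_restrict) auto
  also have "\<dots> = (\<Sum>j\<in>I. scale (-2 * (\<Sum>i\<in>{i\<in>I. i < j}. s i * a i)) (xi j v))"
    by (simp add: scale_sum_left sum_distrib_left mult.assoc)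
  also have "(\<Sum>i\<in>I. \<Sum>j\<in>{j\<in>I. i < j}. scale (2 * s j * a j) (xi i v)) =
      (\<Sum>i\<in>I. scale (2 * (\<Sum>j\<in>{j\<in>I. i < j}. s j * a j)) (xi i v))"
    by (simp add: scale_sum_left sum_distrib_left mult.assoc)
  also have "(\<Sum>j\<in>I. scale (-2 * (\<Sum>i\<in>{i\<in>I. i < j}. s i * a i)) (xi j v)) +
      (\<Sum>i\<in>I. scale (2 * (\<Sum>j\<in>{j\<in>I. i < j}. s j * a j)) (xi i v)) = Qa (\<lambda>m. 2 * step a m) v"
    unfolding Qa_def step_def by (simp add: sum.distrib[symmetric] scale_left_distrib[symmetric] algebra_simps)
  finally show ?thesis .
qed

lemma Qa_neg: "- Qa b w = Qa (\<lambda>m. - b m) w"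
  unfolding Qa_def by (simp add: sum_negf[symmetric])

lemma ad_Qa: "phiT11 scale n xi P 2 (Qa a w) - Qa a (phiT11 scale n xi P 2 w) = Qa (\<lambda>m. -2 * step a m) w"
proof -
  have "phiT11 scale n xi P 2 (Qa a w) - Qa a (phiT11 scale n xi P 2 w) = - (Aop (Qa a w) - Qa a (Aop w))"
    unfolding T2 by (simp add: Qa_diff Qa_scale)
  also have "\<dots> = Qa (\<lambda>m. -2 * step a m) w" unfolding comm Qa_neg by simp
  finally show ?thesis .
qed

lemma step_cc: "step (\<lambda>k. c * cc n s p k) m = c * cc n s (Suc p) m"
  unfolding step_def by (simp add: sum_distrib_left right_diff_distrib mult.left_commute)

lemma ad_iter: "((\<lambda>B w. phiT11 scale n xi P 2 (B w) - B (phiT11 scale n xi P 2 w)) ^^ p)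
    (phiT1m1 scale n xi P 1) = Qa (\<lambda>k. (-2) ^ p * cc n s p k)"
proof (induction p)
  case 0
  show ?case using T1m1 by (auto simp: fun_eq_iff)
next
  case (Suc p)
  show ?case unfolding funpow.simps comp_def Suc.IH
    by (simp add: fun_eq_iff ad_Qa step_cc mult.assoc)
qed

lemma half_pow: "(-(1/2::complex))^i * ((-2)^i * c) = c"
  by (simp add: mult.assoc[symmetric] power_mult_distrib[symmetric])

lemma eta: "eta_op scale n xi P i v = Qa (cc n s i) v"
proof -
  have "eta_op scale n xi P i v = scale ((-1/2) ^ i) (Qa (\<lambda>k. (-2) ^ i * cc n s i k) v)"
    unfolding eta_op_def ad_iter ..
  also have "\<dots> = Qa (cc n s i) v"
    unfolding Qa_def scale_sum_right by (simp add: half_pow)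
  finally show ?thesis .
qed

lemma sc2: "scale c (scale d v + scale d v) = scale (2 * d * c) v"
  by (metis scale_2 scale_scale mult.commute)

lemma QQ: "Qa a (Qa b v) + Qa b (Qa a v) = scale (2 * (\<Sum>k\<in>I. s k * a k * b k)) v"
proof -
  have 1: "Qa a (Qa b v) = (\<Sum>k\<in>I. \<Sum>l\<in>I. scale (a k * b l) (xi k (xi l v)))"
    unfolding Qa_def by (intro sum.cong refl) (auto simp: xi_sum xi_scale scale_sum_right)
  have "Qa b (Qa a v) = (\<Sum>l\<in>I. \<Sum>k\<in>I. scale (b l * a k) (xi l (xi k v)))"
    unfolding Qa_def by (intro sum.cong refl) (auto simp: xi_sum xi_scale scale_sum_right)
  also have "\<dots> = (\<Sum>k\<in>I. \<Sum>l\<in>I. scale (a k * b l) (xi l (xi k v)))"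
    by (subst sum.swap) (simp add: mult.commute)
  finally have 2: "Qa b (Qa a v) = \<dots>" .
  have "Qa a (Qa b v) + Qa b (Qa a v) = (\<Sum>k\<in>I. \<Sum>l\<in>I. scale (a k * b l) (xi k (xi l v) + xi l (xi k v)))"
    unfolding 1 2 by (simp add: sum.distrib[symmetric] scale_right_distrib)
  also have "\<dots> = (\<Sum>k\<in>I. \<Sum>l\<in>I. if l = k then scale (2 * s k * a k * b k) v else 0)"
    by (intro sum.cong refl) (auto simp: anti sq sc2 mult.assoc)
  also have "\<dots> = scale (2 * (\<Sum>k\<in>I. s k * a k * b k)) v"
    by (simp add: scale_sum_left sum_distrib_left mult.assoc)
  finally show ?thesis .
qed

lemma Z: "Z_op scale n xi P i v = scale (\<Sum>k\<in>I. s k * cc n s (2*i) k) v"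
  unfolding Z_op_def eta QQ by simp

end

theorem corollary5p5:
  fixes scale :: "complex \<Rightarrow> 'v::ab_group_add \<Rightarrow> 'v"
    and n :: nat and s :: "nat \<Rightarrow> complex"
    and xi :: "nat \<Rightarrow> 'v \<Rightarrow> 'v" and P :: "'v \<Rightarrow> 'v"
  assumes "n \<ge> 1"
    and "simple_graded_module scale n s xi P"
  shows "\<exists>\<chi> :: nat \<Rightarrow> complex.
           (\<forall>i v. Z_op scale n xi P i v = scale (\<chi> i) v)
         \<and> Abs_fps (\<lambda>m. if odd m then \<chi> (m div 2) else 0)
             = Abs_fps (\<lambda>m. if odd m then elem_sym n s m else 0)
               * inverse (Abs_fps (\<lambda>m. if even m then elem_sym n s m else 0))"
proof -
  have vs: "Vector_Spaces.vector_space scale"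
    and lin: "\<And>i. i \<in> {1..n} \<Longrightarrow> Vector_Spaces.linear scale scale (xi i)"
    and linP: "Vector_Spaces.linear scale scale P"
    and PP: "\<And>v. P (P v) = v"
    and Pxi: "\<And>i v. i \<in> {1..n} \<Longrightarrow> P (xi i v) = - xi i (P v)"
    and an: "\<And>i j v. i \<in> {1..n} \<Longrightarrow> j \<in> {1..n} \<Longrightarrow> i \<noteq> j \<Longrightarrow> xi i (xi j v) + xi j (xi i v) = 0"
    and sq: "\<And>i v. i \<in> {1..n} \<Longrightarrow> xi i (xi i v) = scale (s i) v"
    using assms(2) unfolding simple_graded_module_def by simp_all
  interpret SGM scale n s xi P
  proof (rule SGM.intro)
    show "Vector_Spaces.vector_space scale" by (rule vs)
    show "SGM_axioms scale n s xi P"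
      unfolding SGM_axioms_def using lin linP PP Pxi an sq by simp
  qed
  show ?thesis
  proof (intro exI conjI allI)
    fix i v
    show "Z_op scale n xi P i v = scale (\<Sum>k\<in>{1..n}. s k * cc n s (2*i) k) v" by (rule Z)
  next
    show "Abs_fps (\<lambda>m. if odd m then (\<lambda>i. \<Sum>k\<in>{1..n}. s k * cc n s (2*i) k) (m div 2) else 0)
             = Abs_fps (\<lambda>m. if odd m then elem_sym n s m else 0)
               * inverse (Abs_fps (\<lambda>m. if even m then elem_sym n s m else 0))"
      using main_fps[where n=n and s=s] unfolding Od_def Ev_def by simp
  qed
qed

end
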